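(* Let $X$ take values in a finite set $\mathcal X$ with $\mathbb{P}(X=x)>0$ for all $x$, let $Y\in[M]$, $R\in\{0,1\}$, and let $F$ take values in a finite set $\mathcal F$. Assume $F$ is conditionally independent of $R$ given $(Y,X)$, and $\mathbb{P}(R=1\mid Y=y,X=x)>0$ for all $x,y$. For each $x$ define $\alpha_x(f,y)=\mathbb{P}(R=1,F=f,Y=y\mid X=x)$, $\beta_x(f)=\mathbb{P}(R=0,F=f\mid X=x)$, $A_x=[\alpha_x(f,y)]_{f\in\mathcal F,y\in[M]}$, $\boldsymbol\beta_x=(\beta_x(f))_{f\in\mathcal F}$, $D=\mathrm{diag}(1,2,\dots,M)$, and \[\Pi_x=\Big\{(\pi_x(y))_{y\in[M]}:\ \sum_{y=1}^M\alpha_x(f,y)\Big(\frac1{\pi_x(y)}-1\Big)=\beta_x(f)\ \forall f\in\mathcal F,\ \pi_x(y)\in(0,1]\Big\}.\] Let $\theta_{x,\min}$ and $\theta_{x,\max}$ be the minimum and maximum of $\mathbf 1^\top A_xD(\mathbf w_x+\mathbf 1)$ over $\mathbf w_x\in\mathbb{R}^M$ with $A_x\mathbf w_x=\boldsymbol\beta_x$, $\mathbf w_x\ge\mathbf 0$. Then the set \[\Theta=\Big\{\sum_{x\in\mathcal X}\mathbb{P}(X=x)\sum_{f\in\mathcal F}\sum_{y=1}^M y\,\frac{\alpha_x(f,y)}{\pi_x(y)}:\ (\pi_x)\in\Pi_x\ \forall x\Big\}\] equals $\big[\sum_x\theta_{x,\min}\mathbb{P}(X=x),\ \sum_x\theta_{x,\max}\mathbb{P}(X=x)\big]=:[\theta^{\mathrm{shad}}_{\min},\theta^{\mathrm{shad}}_{\max}]$.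 Moreover, if $A_x$ has full column rank for every $x\in\mathcal X$, then $\theta^{\mathrm{shad}}_{\min}=\theta^{\mathrm{shad}}_{\max}$ (point identification).
   Context: $\Theta$ is the identification set for $\theta=\mathbb{E}[Y]$ when $(X,F,R,RY)$ is observed and missingness may depend on $Y$; $\pi_x(y)$ plays the role of $\mathbb{P}(R=1\mid Y=y,X=x)$. Column vectors $\mathbf 1,\mathbf 0$ are all-ones and all-zeros vectors of appropriate dimension. *)

theory Defs
  imports "HOL-Probability.Probability"
begin

text \<open>Joint law of (X, F, R, Y) as a pmf on tuples (x, f, r, y);
  r = True means R = 1.\<close>

definition PX :: "('x \<times> 'f \<times> bool \<times> nat) pmf \<Rightarrow> 'x \<Rightarrow> real" where
  "PX p x = measure_pmf.prob p {\<omega>. fst \<omega> = x}"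

definition alpha :: "('x \<times> 'f \<times> bool \<times> nat) pmf \<Rightarrow> 'x \<Rightarrow> 'f \<Rightarrow> nat \<Rightarrow> real" where
  "alpha p x f y = measure_pmf.prob p {(x, f, True, y)} / PX p x"

definition beta :: "('x \<times> 'f \<times> bool \<times> nat) pmf \<Rightarrow> 'x \<Rightarrow> 'f \<Rightarrow> real" where
  "beta p x f = measure_pmf.prob p {\<omega>. \<omega> \<in> {x} \<times> {f} \<times> {False} \<times> UNIV} / PX p x"

definition cond_indep_F_R_given_YX :: "('x \<times> 'f \<times> bool \<times> nat) pmf \<Rightarrow> bool" where
  "cond_indep_F_R_given_YX p \<longleftrightarrow> (\<forall>x f r y.
     measure_pmf.prob p {(x, f, r, y)} * measure_pmf.prob p {\<omega>. fst \<omega> = x \<and> snd (snd (snd \<omega>)) = y}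
     = measure_pmf.prob p {\<omega>. fst \<omega> = x \<and> fst (snd \<omega>) = f \<and> snd (snd (snd \<omega>)) = y}
       * measure_pmf.prob p {\<omega>. fst \<omega> = x \<and> fst (snd (snd \<omega>)) = r \<and> snd (snd (snd \<omega>)) = y})"

definition prop_R1 :: "('x \<times> 'f \<times> bool \<times> nat) pmf \<Rightarrow> 'x \<Rightarrow> nat \<Rightarrow> real" where
  "prop_R1 p x y = measure_pmf.prob p {\<omega>. fst \<omega> = x \<and> fst (snd (snd \<omega>)) \<and> snd (snd (snd \<omega>)) = y}
     / measure_pmf.prob p {\<omega>. fst \<omega> = x \<and> snd (snd (snd \<omega>)) = y}"

text \<open>Pi_x: the set of (pi_x(y))_{y in [M]} (functions, only values on {1..M} matter).\<close>
definition Pi_set :: "('x \<times> 'f \<times> bool \<times> nat) pmf \<Rightarrow> 'f set \<Rightarrow> nat \<Rightarrow> 'x \<Rightarrow> (nat \<Rightarrow> real) set" where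
  "Pi_set p FF M x = {\<pi>. (\<forall>f\<in>FF. (\<Sum>y=1..M. alpha p x f y * (1 / \<pi> y - 1)) = beta p x f)
                        \<and> (\<forall>y\<in>{1..M}. 0 < \<pi> y \<and> \<pi> y \<le> 1)}"

definition lp_values :: "('x \<times> 'f \<times> bool \<times> nat) pmf \<Rightarrow> 'f set \<Rightarrow> nat \<Rightarrow> 'x \<Rightarrow> real set" where
  "lp_values p FF M x = {(\<Sum>f\<in>FF. \<Sum>y=1..M. alpha p x f y * real y * (w y + 1)) | w :: nat \<Rightarrow> real.
       (\<forall>f\<in>FF. (\<Sum>y=1..M. alpha p x f y * w y) = beta p x f) \<and> (\<forall>y\<in>{1..M}. 0 \<le> w y)}"

definition theta_min :: "('x \<times> 'f \<times> bool \<times> nat) pmf \<Rightarrow> 'f set \<Rightarrow> nat \<Rightarrow> 'x \<Rightarrow> real" where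
  "theta_min p FF M x = Inf (lp_values p FF M x)"

definition theta_max :: "('x \<times> 'f \<times> bool \<times> nat) pmf \<Rightarrow> 'f set \<Rightarrow> nat \<Rightarrow> 'x \<Rightarrow> real" where
  "theta_max p FF M x = Sup (lp_values p FF M x)"

definition Theta :: "('x \<times> 'f \<times> bool \<times> nat) pmf \<Rightarrow> 'x set \<Rightarrow> 'f set \<Rightarrow> nat \<Rightarrow> real set" where
  "Theta p XX FF M = {(\<Sum>x\<in>XX. PX p x * (\<Sum>f\<in>FF. \<Sum>y=1..M. real y * alpha p x f y / \<pi> x y))
      | \<pi> :: 'x \<Rightarrow> nat \<Rightarrow> real. \<forall>x\<in>XX. \<pi> x \<in> Pi_set p FF M x}"

text \<open>A_x = [alpha_x(f,y)] (rows f in FF, columns y in [M]) has full column rank,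
  i.e. its columns are linearly independent.\<close>
definition full_column_rank :: "('f \<Rightarrow> nat \<Rightarrow> real) \<Rightarrow> 'f set \<Rightarrow> nat \<Rightarrow> bool" where
  "full_column_rank A FF M \<longleftrightarrow> (\<forall>w :: nat \<Rightarrow> real.
      (\<forall>f\<in>FF. (\<Sum>y=1..M. A f y * w y) = 0) \<longrightarrow> (\<forall>y\<in>{1..M}. w y = 0))"

end

theory Submission imports Defs begin

definition lpv :: "('f \<Rightarrow> nat \<Rightarrow> real) \<Rightarrow> ('f \<Rightarrow> real) \<Rightarrow> 'f set \<Rightarrow> nat \<Rightarrow> real set" where
  "lpv a b FF M = {(\<Sum>f\<in>FF. \<Sum>y=1..M. a f y * real y * (w y + 1)) | w :: nat \<Rightarrow> real.
       (\<forall>f\<in>FF. (\<Sum>y=1..M. a f y * w y) = b f) \<and> (\<forall>y\<in>{1..M}. 0 \<le> w y)}"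

lemma lpv_interval:
  fixes a :: "'f \<Rightarrow> nat \<Rightarrow> real" and b :: "'f \<Rightarrow> real"
  assumes fin: "finite FF" and nn: "\<forall>f\<in>FF. \<forall>y\<in>{1..M}. 0 \<le> a f y"
    and pos: "\<forall>y\<in>{1..M}. \<exists>f\<in>FF. 0 < a f y" and ne: "lpv a b FF M \<noteq> {}"
  shows "lpv a b FF M = {Inf (lpv a b FF M) .. Sup (lpv a b FF M)}"
proof -
  obtain g where g: "\<forall>y\<in>{1..M}. g y \<in> FF \<and> 0 < a (g y) y"
    using pos by metis
  define Bd where "Bd y = (if y \<in> {1..M} then b (g y) / a (g y) y else 0)" for y
  define S where "S y = {0..Bd y}" for y
  define W where "W = {w. (\<forall>f\<in>FF. (\<Sum>y=1..M. a f y * w y) = b f) \<and> (\<forall>y. w y \<in> S y)}"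
  define val where "val w = (\<Sum>f\<in>FF. \<Sum>y=1..M. a f y * real y * (w y + 1))" for w :: "nat \<Rightarrow> real"
  let ?L = "lpv a b FF M"
  have L: "?L = val ` W"
  proof
    show "?L \<subseteq> val ` W"
    proof
      fix v assume "v \<in> ?L"
      then obtain w where v: "v = val w" and w1: "\<forall>f\<in>FF. (\<Sum>y=1..M. a f y * w y) = b f"
        and w2: "\<forall>y\<in>{1..M}. 0 \<le> w y" unfolding lpv_def val_def by blast
      define w' where "w' y = (if y \<in> {1..M} then w y else 0)" for y
      have e1: "(\<Sum>y=1..M. a f y * w' y) = (\<Sum>y=1..M. a f y * w y)" for f
        by (rule sum.cong) (auto simp: w'_def)
      have "val w' = val w" unfolding val_def
        by (intro sum.cong refl) (auto simp: w'_def)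
      moreover have "w' \<in> W"
        unfolding W_def
      proof (intro CollectI conjI allI ballI)
        fix f assume "f \<in> FF" then show "(\<Sum>y=1..M. a f y * w' y) = b f" using e1 w1 by simp
      next
        fix y
        show "w' y \<in> S y"
        proof (cases "y \<in> {1..M}")
          case True
          have "a (g y) y * w y \<le> (\<Sum>y'=1..M. a (g y) y' * w y')"
            by (rule member_le_sum) (use True g nn w2 in auto)
          also have "\<dots> = b (g y)" using w1 g True by auto
          finally have "w y \<le> b (g y) / a (g y) y" using g True
            by (simp add: pos_le_divide_eq mult.commute)
          then show ?thesis using True w2 by (simp add: w'_def S_def Bd_def)
        qed (auto simp: w'_def S_def Bd_def)
      qed
      ultimately show "v \<in> val ` W" using v by (metis image_eqI)
    qed
  next
    show "val ` W \<subseteq> ?L" unfolding W_def val_def lpv_def S_def by auto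
  qed
  have cW: "compact W"
  proof -
    have "compactin (product_topology (\<lambda>_. euclidean) UNIV) (PiE UNIV S)"
      by (subst compactin_PiE) (auto simp: S_def compactin_euclidean_iff)
    then have c1: "compact (PiE UNIV S)"
      by (simp add: euclidean_product_topology compactin_euclidean_iff)
    have cl: "closed {w. \<forall>f\<in>FF. (\<Sum>y=1..M. a f y * w y) = b f}"
    proof -
      have "{w. \<forall>f\<in>FF. (\<Sum>y=1..M. a f y * w y) = b f} = (\<Inter>f\<in>FF. {w. (\<Sum>y=1..M. a f y * w y) = b f})"
        by auto
      moreover have "closed {w::nat\<Rightarrow>real. (\<Sum>y=1..M. a f y * w y) = b f}" for f
        by (intro closed_Collect_eq continuous_intros continuous_on_product_coordinates)
      ultimately show ?thesis by auto
    qed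
    have "W = PiE UNIV S \<inter> {w. \<forall>f\<in>FF. (\<Sum>y=1..M. a f y * w y) = b f}"
      unfolding W_def by (auto simp: PiE_def Pi_def)
    then show ?thesis using c1 cl by (simp add: compact_Int_closed)
  qed
  have cont: "continuous_on W val" unfolding val_def
    by (intro continuous_intros continuous_on_subset[OF continuous_on_product_coordinates]) auto
  have cL: "compact ?L" using L cW cont compact_continuous_image by metis
  have bL: "bounded ?L" using cL compact_imp_bounded by blast
  have bdd: "bdd_below ?L" "bdd_above ?L"
    using bounded_imp_bdd_below[OF bL] bounded_imp_bdd_above[OF bL] by auto
  have inL: "Inf ?L \<in> ?L" "Sup ?L \<in> ?L"
    using cL ne bdd closed_contains_Inf closed_contains_Sup compact_imp_closed by auto
  show ?thesis
  proof
    show "?L \<subseteq> {Inf ?L .. Sup ?L}" using bdd by (auto intro: cInf_lower cSup_upper)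
  next
    show "{Inf ?L .. Sup ?L} \<subseteq> ?L"
    proof
      fix v assume v: "v \<in> {Inf ?L .. Sup ?L}"
      obtain w1 where w1: "w1 \<in> W" "Inf ?L = val w1" using inL L by auto
      obtain w2 where w2: "w2 \<in> W" "Sup ?L = val w2" using inL L by auto
      show "v \<in> ?L"
      proof (cases "Inf ?L = Sup ?L")
        case True then show ?thesis using v inL by auto
      next
        case False
        then have lt: "Inf ?L < Sup ?L" using v by auto
        define t where "t = (v - Inf ?L) / (Sup ?L - Inf ?L)"
        have t: "0 \<le> t" "t \<le> 1" using v lt by (auto simp: t_def divide_simps)
        have ht: "t * (Sup ?L - Inf ?L) = v - Inf ?L" using lt by (simp add: t_def)
        have vt: "v = (1 - t) * Inf ?L + t * Sup ?L" using ht by (simp add: algebra_simps)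
        define w where "w y = (1 - t) * w1 y + t * w2 y" for y
        have vw: "val w = (1 - t) * val w1 + t * val w2"
        proof -
          have "a f y * real y * (w y + 1) = (1 - t) * (a f y * real y * (w1 y + 1)) + t * (a f y * real y * (w2 y + 1))" for f y
            by (simp add: w_def algebra_simps)
          then show ?thesis unfolding val_def by (simp add: sum.distrib sum_distrib_left)
        qed
        have "(\<Sum>y=1..M. a f y * w y) = b f" if "f \<in> FF" for f
        proof -
          have "a f y * w y = (1 - t) * (a f y * w1 y) + t * (a f y * w2 y)" for y
            by (simp add: w_def algebra_simps)
          then have "(\<Sum>y=1..M. a f y * w y) = (1 - t) * (\<Sum>y=1..M. a f y * w1 y) + t * (\<Sum>y=1..M. a f y * w2 y)"
            by (simp add: sum.distrib sum_distrib_left)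
          also have "\<dots> = b f" using w1 w2 that unfolding W_def by (simp add: algebra_simps)
          finally show ?thesis .
        qed
        moreover have "0 \<le> w y" for y
          using w1 w2 t unfolding W_def S_def w_def by (auto intro!: add_nonneg_nonneg mult_nonneg_nonneg)
        ultimately have "val w \<in> ?L" unfolding lpv_def val_def by auto
        then show ?thesis using vw vt w1 w2 by simp
      qed
    qed
  qed
qed


lemma lp_values_lpv: "lp_values p FF M x = lpv (alpha p x) (beta p x) FF M"
  unfolding lp_values_def lpv_def by simp

lemma alpha_nonneg:
  assumes "PX p x > 0" shows "0 \<le> alpha p x f y"
  using assms unfolding alpha_def by simp

lemma alpha_pos:
  fixes p :: "('x \<times> 'f \<times> bool \<times> nat) pmf"
  assumes supp: "set_pmf p \<subseteq> XX \<times> FF \<times> UNIV \<times> {1..M}" and px: "PX p x > 0"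
    and pr: "prop_R1 p x y > 0"
  shows "\<exists>f\<in>FF. 0 < alpha p x f y"
proof -
  let ?S = "{\<omega>. fst \<omega> = x \<and> fst (snd (snd \<omega>)) \<and> snd (snd (snd \<omega>)) = y}"
  have "measure_pmf.prob p ?S \<noteq> 0" using pr unfolding prop_R1_def by auto
  then obtain \<omega> where om: "\<omega> \<in> set_pmf p" "\<omega> \<in> ?S" using measure_pmf_zero_iff by blast
  then obtain f where omf: "\<omega> = (x, f, True, y)" by (cases \<omega>) auto
  have "f \<in> FF" using om omf supp by auto
  moreover have "pmf p \<omega> > 0" using om by (simp add: pmf_positive)
  ultimately show ?thesis using omf px unfolding alpha_def by (auto simp: measure_pmf_single intro!: bexI[of _ f])
qed

lemma lp_nonempty:
  fixes p :: "('x \<times> 'f \<times> bool \<times> nat) pmf"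
  assumes supp: "set_pmf p \<subseteq> XX \<times> FF \<times> UNIV \<times> {1..M}" and px: "PX p x > 0"
    and ci: "cond_indep_F_R_given_YX p"
    and pr: "\<forall>y\<in>{1..M}. prop_R1 p x y > 0"
  shows "lp_values p FF M x \<noteq> {}"
proof -
  let ?P = "measure_pmf.prob p"
  define Nxy where "Nxy y = ?P {\<omega>. fst \<omega> = x \<and> snd (snd (snd \<omega>)) = y}" for y
  define N1 where "N1 y = ?P {\<omega>. fst \<omega> = x \<and> fst (snd (snd \<omega>)) \<and> snd (snd (snd \<omega>)) = y}" for y
  define Nf where "Nf f y = ?P {\<omega>. fst \<omega> = x \<and> fst (snd \<omega>) = f \<and> snd (snd (snd \<omega>)) = y}" for f y
  define w where "w y = 1 / prop_R1 p x y - 1" for y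
  have pR: "prop_R1 p x y = N1 y / Nxy y" for y unfolding prop_R1_def N1_def Nxy_def by simp
  have N1pos: "N1 y > 0" and Nxypos: "Nxy y > 0" if "y \<in> {1..M}" for y
  proof -
    have "N1 y / Nxy y > 0" using pr that pR by auto
    moreover have "N1 y \<ge> 0" "Nxy y \<ge> 0" unfolding N1_def Nxy_def by auto
    ultimately show "N1 y > 0" "Nxy y > 0"
      by (metis divide_eq_0_iff less_eq_real_def)+
  qed
  have N1le: "N1 y \<le> Nxy y" for y
    unfolding N1_def Nxy_def by (rule measure_pmf.finite_measure_mono) auto
  have w0: "0 \<le> w y" if "y \<in> {1..M}" for y
    using N1pos[OF that] Nxypos[OF that] N1le[of y] unfolding w_def pR by simp
  have CI: "pmf p (x, f, True, y) * Nxy y = Nf f y * N1 y" for f y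
    using ci unfolding cond_indep_F_R_given_YX_def Nxy_def Nf_def N1_def
    by (auto simp: measure_pmf_single elim!: allE[of _ x] allE[of _ f] allE[of _ True] allE[of _ y])
  have Nfs: "Nf f y = pmf p (x, f, True, y) + pmf p (x, f, False, y)" for f y
  proof -
    have "{\<omega>. fst \<omega> = x \<and> fst (snd \<omega>) = f \<and> snd (snd (snd \<omega>)) = y} = {(x, f, True, y), (x, f, False, y)}"
      by auto
    then show ?thesis unfolding Nf_def by (simp add: measure_measure_pmf_finite)
  qed
  have trm: "alpha p x f y * w y = pmf p (x, f, False, y) / PX p x" if "y \<in> {1..M}" for f y
  proof -
    have "alpha p x f y * w y = pmf p (x, f, True, y) / PX p x * (Nxy y / N1 y - 1)"
      unfolding alpha_def w_def pR by (simp add: measure_pmf_single)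
    also have "\<dots> = (pmf p (x, f, True, y) * Nxy y / N1 y - pmf p (x, f, True, y)) / PX p x"
      by (simp add: field_simps)
    also have "\<dots> = (Nf f y - pmf p (x, f, True, y)) / PX p x"
      using CI[of f y] N1pos[OF that] by simp
    also have "\<dots> = pmf p (x, f, False, y) / PX p x" using Nfs by simp
    finally show ?thesis .
  qed
  have sumF: "(\<Sum>y=1..M. pmf p (x, f, False, y)) = ?P ({x} \<times> {f} \<times> {False} \<times> UNIV)" for f
  proof -
    let ?B = "(\<lambda>y. (x, f, False, y)) ` {1..M}"
    have "?P ({x} \<times> {f} \<times> {False} \<times> UNIV) = ?P (({x} \<times> {f} \<times> {False} \<times> UNIV) \<inter> set_pmf p)"
      by (simp add: measure_Int_set_pmf)
    also have "({x} \<times> {f} \<times> {False} \<times> UNIV) \<inter> set_pmf p = ?B \<inter> set_pmf p"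
      using supp by auto
    also have "?P (?B \<inter> set_pmf p) = ?P ?B" by (simp add: measure_Int_set_pmf)
    also have "\<dots> = (\<Sum>y=1..M. pmf p (x, f, False, y))"
      by (subst measure_measure_pmf_finite) (auto simp: sum.reindex inj_on_def)
    finally show ?thesis by simp
  qed
  have "(\<Sum>y=1..M. alpha p x f y * w y) = beta p x f" for f
  proof -
    have "(\<Sum>y=1..M. alpha p x f y * w y) = (\<Sum>y=1..M. pmf p (x, f, False, y) / PX p x)"
      by (rule sum.cong) (auto simp: trm)
    also have "\<dots> = beta p x f" unfolding beta_def using sumF[of f]
      by (simp only: Collect_mem_eq sum_divide_distrib[symmetric])
    finally show ?thesis .
  qed
  then show ?thesis unfolding lp_values_def using w0 by blast
qed

lemma lpv_singleton:
  assumes fr: "full_column_rank a FF M" and v1: "v1 \<in> lpv a b FF M" and v2: "v2 \<in> lpv a b FF M"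
  shows "v1 = v2"
proof -
  obtain w1 where w1: "v1 = (\<Sum>f\<in>FF. \<Sum>y=1..M. a f y * real y * (w1 y + 1))"
    "\<forall>f\<in>FF. (\<Sum>y=1..M. a f y * w1 y) = b f" using v1 unfolding lpv_def by blast
  obtain w2 where w2: "v2 = (\<Sum>f\<in>FF. \<Sum>y=1..M. a f y * real y * (w2 y + 1))"
    "\<forall>f\<in>FF. (\<Sum>y=1..M. a f y * w2 y) = b f" using v2 unfolding lpv_def by blast
  have "\<forall>f\<in>FF. (\<Sum>y=1..M. a f y * (\<lambda>y. w1 y - w2 y) y) = 0"
    using w1(2) w2(2) by (simp add: right_diff_distrib sum_subtractf)
  then have "\<forall>y\<in>{1..M}. w1 y - w2 y = 0"
    by (rule mp[OF fr[unfolded full_column_rank_def, THEN spec[of _ "\<lambda>y. w1 y - w2 y"]]])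
  then show ?thesis unfolding w1 w2 by (intro sum.cong refl) auto
qed

theorem proposition4:
  fixes p :: "('x \<times> 'f \<times> bool \<times> nat) pmf"
    and XX :: "'x set" and FF :: "'f set" and M :: nat
  assumes "finite XX" and "finite FF" and "0 < M"
    and "set_pmf p \<subseteq> XX \<times> FF \<times> UNIV \<times> {1..M}"
    and "\<forall>x\<in>XX. PX p x > 0"
    and "cond_indep_F_R_given_YX p"
    and "\<forall>x\<in>XX. \<forall>y\<in>{1..M}. prop_R1 p x y > 0"
  shows "Theta p XX FF M =
           {(\<Sum>x\<in>XX. theta_min p FF M x * PX p x) .. (\<Sum>x\<in>XX. theta_max p FF M x * PX p x)}
     \<and> ((\<forall>x\<in>XX. full_column_rank (alpha p x) FF M) \<longrightarrow>
           (\<Sum>x\<in>XX. theta_min p FF M x * PX p x) = (\<Sum>x\<in>XX. theta_max p FF M x * PX p x))"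
proof -
  note supp = assms(4) and px = assms(5) and ci = assms(6) and pr = assms(7)
  let ?L = "lp_values p FF M"
  let ?lo = "theta_min p FF M" and ?hi = "theta_max p FF M"
  have ne: "?L x \<noteq> {}" if "x \<in> XX" for x
    using lp_nonempty[OF supp _ ci] px that pr by simp
  have Lx: "?L x = {?lo x .. ?hi x}" if x: "x \<in> XX" for x
  proof -
    have "lpv (alpha p x) (beta p x) FF M = {Inf (lpv (alpha p x) (beta p x) FF M) .. Sup (lpv (alpha p x) (beta p x) FF M)}"
    proof (rule lpv_interval[OF assms(2)])
      show "\<forall>f\<in>FF. \<forall>y\<in>{1..M}. 0 \<le> alpha p x f y" using px x by (intro ballI alpha_nonneg) auto
      show "\<forall>y\<in>{1..M}. \<exists>f\<in>FF. 0 < alpha p x f y" using alpha_pos[OF supp] px pr x by blast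
      show "lpv (alpha p x) (beta p x) FF M \<noteq> {}" using ne[OF x] lp_values_lpv by metis
    qed
    then show ?thesis unfolding theta_min_def theta_max_def lp_values_lpv .
  qed
  have lohi: "?lo x \<le> ?hi x" if "x \<in> XX" for x using Lx[OF that] ne[OF that] by auto
  have PX0: "PX p x \<ge> 0" if "x \<in> XX" for x using px that by fastforce
  have Theta_eq: "Theta p XX FF M = {(\<Sum>x\<in>XX. PX p x * g x) | g. \<forall>x\<in>XX. g x \<in> ?L x}"
  proof
    show "Theta p XX FF M \<subseteq> {(\<Sum>x\<in>XX. PX p x * g x) | g. \<forall>x\<in>XX. g x \<in> ?L x}"
    proof
      fix v assume "v \<in> Theta p XX FF M"
      then obtain \<pi> where v: "v = (\<Sum>x\<in>XX. PX p x * (\<Sum>f\<in>FF. \<Sum>y=1..M. real y * alpha p x f y / \<pi> x y))"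
        and pi: "\<forall>x\<in>XX. \<pi> x \<in> Pi_set p FF M x" unfolding Theta_def by blast
      have "(\<Sum>f\<in>FF. \<Sum>y=1..M. real y * alpha p x f y / \<pi> x y) \<in> ?L x" if x: "x \<in> XX" for x
      proof -
        define w where "w y = 1 / \<pi> x y - 1" for y
        have pix: "\<forall>f\<in>FF. (\<Sum>y=1..M. alpha p x f y * w y) = beta p x f"
          "\<forall>y\<in>{1..M}. 0 < \<pi> x y \<and> \<pi> x y \<le> 1"
          using pi x unfolding Pi_set_def w_def by auto
        have w0: "\<forall>y\<in>{1..M}. 0 \<le> w y" using pix(2) unfolding w_def by auto
        have "(\<Sum>f\<in>FF. \<Sum>y=1..M. real y * alpha p x f y / \<pi> x y) = (\<Sum>f\<in>FF. \<Sum>y=1..M. alpha p x f y * real y * (w y + 1))"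
          by (intro sum.cong refl) (use pix(2) in \<open>auto simp: w_def\<close>)
        then show ?thesis unfolding lp_values_def using pix(1) w0 by blast
      qed
      then show "v \<in> {(\<Sum>x\<in>XX. PX p x * g x) | g. \<forall>x\<in>XX. g x \<in> ?L x}" using v
        by (intro CollectI exI[of _ "\<lambda>x. (\<Sum>f\<in>FF. \<Sum>y=1..M. real y * alpha p x f y / \<pi> x y)"] conjI) auto
    qed
  next
    show "{(\<Sum>x\<in>XX. PX p x * g x) | g. \<forall>x\<in>XX. g x \<in> ?L x} \<subseteq> Theta p XX FF M"
    proof
      fix v assume "v \<in> {(\<Sum>x\<in>XX. PX p x * g x) | g. \<forall>x\<in>XX. g x \<in> ?L x}"
      then obtain g where v: "v = (\<Sum>x\<in>XX. PX p x * g x)" and g: "\<forall>x\<in>XX. g x \<in> ?L x" by blast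
      have exw: "\<forall>x\<in>XX. \<exists>w. g x = (\<Sum>f\<in>FF. \<Sum>y=1..M. alpha p x f y * real y * (w y + 1)) \<and>
         (\<forall>f\<in>FF. (\<Sum>y=1..M. alpha p x f y * w y) = beta p x f) \<and> (\<forall>y\<in>{1..M}. 0 \<le> w y)"
        using g unfolding lp_values_def by blast
      obtain W where W: "\<forall>x\<in>XX. g x = (\<Sum>f\<in>FF. \<Sum>y=1..M. alpha p x f y * real y * (W x y + 1)) \<and>
         (\<forall>f\<in>FF. (\<Sum>y=1..M. alpha p x f y * W x y) = beta p x f) \<and> (\<forall>y\<in>{1..M}. 0 \<le> W x y)"
        using bchoice[OF exw] by blast
      define \<pi> where "\<pi> x y = 1 / (W x y + 1)" for x y
      have "\<pi> x \<in> Pi_set p FF M x \<and> g x = (\<Sum>f\<in>FF. \<Sum>y=1..M. real y * alpha p x f y / \<pi> x y)"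
        if x: "x \<in> XX" for x
      proof -
        have W0: "\<forall>y\<in>{1..M}. 0 \<le> W x y" using W x by blast
        have inv: "1 / \<pi> x y - 1 = W x y" for y unfolding \<pi>_def by simp
        have pib: "0 < \<pi> x y \<and> \<pi> x y \<le> 1" if y: "y \<in> {1..M}" for y
        proof -
          have "0 \<le> W x y" using W0 y by blast
          then show ?thesis unfolding \<pi>_def by (simp add: divide_le_eq_1)
        qed
        have "\<pi> x \<in> Pi_set p FF M x" unfolding Pi_set_def mem_Collect_eq inv using W x pib
          by blast
        moreover have "g x = (\<Sum>f\<in>FF. \<Sum>y=1..M. real y * alpha p x f y / \<pi> x y)"
          using W x by (auto simp: \<pi>_def intro!: sum.cong)
        ultimately show ?thesis by blast
      qed
      then have "v = (\<Sum>x\<in>XX. PX p x * (\<Sum>f\<in>FF. \<Sum>y=1..M. real y * alpha p x f y / \<pi> x y))"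
        "\<forall>x\<in>XX. \<pi> x \<in> Pi_set p FF M x"
        unfolding v by (auto intro!: sum.cong)
      then show "v \<in> Theta p XX FF M" unfolding Theta_def by blast
    qed
  qed
  have part1: "Theta p XX FF M = {(\<Sum>x\<in>XX. ?lo x * PX p x) .. (\<Sum>x\<in>XX. ?hi x * PX p x)}"
    unfolding Theta_eq
  proof
    show "{(\<Sum>x\<in>XX. PX p x * g x) | g. \<forall>x\<in>XX. g x \<in> ?L x} \<subseteq> {(\<Sum>x\<in>XX. ?lo x * PX p x) .. (\<Sum>x\<in>XX. ?hi x * PX p x)}"
    proof
      fix v assume "v \<in> {(\<Sum>x\<in>XX. PX p x * g x) | g. \<forall>x\<in>XX. g x \<in> ?L x}"
      then obtain g where v: "v = (\<Sum>x\<in>XX. PX p x * g x)" and g: "\<forall>x\<in>XX. g x \<in> ?L x" by blast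
      have b1: "?lo x * PX p x \<le> PX p x * g x" "PX p x * g x \<le> ?hi x * PX p x" if x: "x \<in> XX" for x
      proof -
        have "?lo x \<le> g x" "g x \<le> ?hi x" using g Lx x by auto
        then have "?lo x * PX p x \<le> g x * PX p x" "g x * PX p x \<le> ?hi x * PX p x"
          using PX0[OF x] by (auto intro: mult_right_mono)
        then show "?lo x * PX p x \<le> PX p x * g x" "PX p x * g x \<le> ?hi x * PX p x"
          by (simp_all only: mult.commute[of "g x"])
      qed
      have "(\<Sum>x\<in>XX. ?lo x * PX p x) \<le> v" unfolding v
        by (rule sum_mono) (rule b1)
      moreover have "v \<le> (\<Sum>x\<in>XX. ?hi x * PX p x)" unfolding v
        by (rule sum_mono) (rule b1)
      ultimately show "v \<in> {(\<Sum>x\<in>XX. ?lo x * PX p x) .. (\<Sum>x\<in>XX. ?hi x * PX p x)}" by simp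
    qed
  next
    show "{(\<Sum>x\<in>XX. ?lo x * PX p x) .. (\<Sum>x\<in>XX. ?hi x * PX p x)} \<subseteq> {(\<Sum>x\<in>XX. PX p x * g x) | g. \<forall>x\<in>XX. g x \<in> ?L x}"
    proof
      fix v assume v: "v \<in> {(\<Sum>x\<in>XX. ?lo x * PX p x) .. (\<Sum>x\<in>XX. ?hi x * PX p x)}"
      define A where "A = (\<Sum>x\<in>XX. ?lo x * PX p x)"
      define B where "B = (\<Sum>x\<in>XX. ?hi x * PX p x)"
      have vAB: "A \<le> v" "v \<le> B" using v unfolding A_def B_def by auto
      obtain t where t: "0 \<le> t" "t \<le> 1" "v = (1 - t) * A + t * B"
      proof (cases "A = B")
        case True then have "v = (1 - 0) * A + 0 * B" using vAB by simp
        then show ?thesis using that[of 0] by simp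
      next
        case False
        then have lt: "A < B" using vAB by simp
        define t where "t = (v - A) / (B - A)"
        have "t * (B - A) = v - A" using lt by (simp add: t_def)
        then have "v = (1 - t) * A + t * B" by (simp add: algebra_simps)
        moreover have "0 \<le> t" "t \<le> 1" using vAB lt by (auto simp: t_def divide_simps)
        ultimately show ?thesis using that by blast
      qed
      define g where "g x = (1 - t) * ?lo x + t * ?hi x" for x
      have gL: "\<forall>x\<in>XX. g x \<in> ?L x"
      proof
        fix x assume x: "x \<in> XX"
        have "(1 - t) * ?lo x + t * ?lo x \<le> g x" unfolding g_def
          using lohi[OF x] t by (intro add_left_mono mult_left_mono) auto
        moreover have "g x \<le> (1 - t) * ?hi x + t * ?hi x" unfolding g_def
          using lohi[OF x] t by (intro add_right_mono mult_left_mono) auto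
        ultimately show "g x \<in> ?L x" using Lx[OF x] by (simp add: algebra_simps)
      qed
      have "(\<Sum>x\<in>XX. PX p x * g x) = (1 - t) * A + t * B"
      proof -
        have "(\<Sum>x\<in>XX. PX p x * g x) = (\<Sum>x\<in>XX. (1 - t) * (?lo x * PX p x) + t * (?hi x * PX p x))"
          by (rule sum.cong) (simp_all add: g_def algebra_simps)
        also have "\<dots> = (1 - t) * A + t * B"
          unfolding A_def B_def by (simp only: sum.distrib sum_distrib_left)
        finally show ?thesis .
      qed
      then show "v \<in> {(\<Sum>x\<in>XX. PX p x * g x) | g. \<forall>x\<in>XX. g x \<in> ?L x}" using gL t(3)
        by (intro CollectI exI[of _ g] conjI) auto
    qed
  qed
  have part2: "(\<Sum>x\<in>XX. ?lo x * PX p x) = (\<Sum>x\<in>XX. ?hi x * PX p x)"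
    if fr: "\<forall>x\<in>XX. full_column_rank (alpha p x) FF M"
  proof (rule sum.cong[OF refl])
    fix x assume x: "x \<in> XX"
    have "?lo x \<in> ?L x" "?hi x \<in> ?L x" using Lx[OF x] lohi[OF x] by auto
    then have "?lo x = ?hi x" using lpv_singleton fr x lp_values_lpv by metis
    then show "?lo x * PX p x = ?hi x * PX p x" by simp
  qed
  show ?thesis using part1 part2 by blast
qed

end
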